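(* Let $\Lambda\in(\mathbb{R}\setminus\{0\})^n$, let $\mathcal{X}$ be as in the context and $P\in\mathrm{Lip}_{\mathcal{X}}(\mathbb{C}^n,\mathbb{C}^n)$. Then for every $a\in\mathbb{C}^n$ the limit $\langle\langle P\rangle\rangle(a)=\lim_{T\to\pm\infty}\langle\langle P\rangle\rangle^T(a)$ exists, and $\langle\langle P\rangle\rangle\in\mathrm{Lip}_{\mathcal{X}}(\mathbb{C}^n,\mathbb{C}^n)$. Moreover, for every $R>0$ the convergence is uniform in $a\in\bar B_R$, i.e. the rate of convergence depends only on $R$, $\Lambda$ and $P$.
   Context: $\mathbb{C}^n\cong\mathbb{R}^{2n}$ with Euclidean norm; $B_R=\{v:|v|<R\}$, $\bar B_R$ its closure. For a non-decreasing continuous function $\mathcal{X}:\mathbb{R}_+\to\mathbb{R}_+$, $\mathrm{Lip}_{\mathcal{X}}(\mathbb{C}^n,\mathbb{C}^n)$ is the set of continuous vector fields $f:\mathbb{C}^n\to\mathbb{C}^n$ with $\sup_{B_R}|f|\le\mathcal{X}(R)$ and $\mathrm{Lip}(f|_{B_R})\le\mathcal{X}(R)$ for all $R\ge0$. For $w\in\mathbb{R}^n$, $\Phi_w=\mathrm{diag}(e^{\mathbf{i}w_1},\dots,e^{\mathbf{i}w_n})$. For $T\ne0$, $\langle\langle P\rangle\rangle^T(a)=\frac{1}{|T|}\int_0^T\Phi_{\Lambda t}P(\Phi_{-\Lambda t}a)\,dt$ (for $T<0$, $\int_0^T$ means $\int_T^0$). *)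

theory Defs
  imports "HOL-Analysis.Analysis"
begin

text \<open>C^n is modelled as complex ^ 'n (Euclidean norm).
  Phi w = diag(exp(i w_1), ..., exp(i w_n)).\<close>
definition Phi :: "real^'n \<Rightarrow> complex^'n \<Rightarrow> complex^'n" where
  "Phi w a = (\<chi> i. exp (\<i> * complex_of_real (w $ i)) * a $ i)"

definition avgT :: "real^'n \<Rightarrow> (complex^'n \<Rightarrow> complex^'n) \<Rightarrow> real \<Rightarrow> complex^'n \<Rightarrow> complex^'n" where
  "avgT \<Lambda> P T a = (1 / \<bar>T\<bar>) *\<^sub>R
     integral {min 0 T..max 0 T} (\<lambda>t. Phi (t *\<^sub>R \<Lambda>) (P (Phi (- (t *\<^sub>R \<Lambda>)) a)))"

definition LipX :: "(real \<Rightarrow> real) \<Rightarrow> (complex^'n \<Rightarrow> complex^'n) set" where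
  "LipX X = {f. continuous_on UNIV f \<and>
     (\<forall>R\<ge>0. (\<forall>v\<in>ball 0 R. norm (f v) \<le> X R) \<and> lipschitz_on (X R) (ball 0 R) f)}"

end

theory Submission
  imports Defs
begin


lemma Phi_nth[simp]: "Phi w a $ i = exp (\<i> * complex_of_real (w $ i)) * a $ i"
  by (simp add: Phi_def)

lemma norm_Phi[simp]: "norm (Phi w a) = norm a"
  unfolding norm_vec_def by (simp add: norm_mult norm_exp_i_times)

lemma Phi_diff: "Phi w a - Phi w b = Phi w (a - b)"
  by (simp add: vec_eq_iff algebra_simps)

lemma norm_vec_le_sum: "norm (x::complex^'n) \<le> (\<Sum>i\<in>UNIV. norm (x $ i))"
  unfolding norm_vec_def by (rule L2_set_le_sum) auto

lemma cont_integrand: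
  assumes "continuous_on UNIV g"
  shows "continuous_on UNIV (\<lambda>t. Phi (t *\<^sub>R \<Lambda>) (g (Phi (- (t *\<^sub>R \<Lambda>)) a)))"
proof -
  have c1: "continuous_on UNIV (\<lambda>t. Phi (- (t *\<^sub>R \<Lambda>)) a)"
    unfolding Phi_def by (intro continuous_on_vec_lambda continuous_intros continuous_on_component)
  have c2: "continuous_on UNIV (\<lambda>t. g (Phi (- (t *\<^sub>R \<Lambda>)) a))"
    by (rule continuous_on_compose2[OF assms c1]) auto
  show ?thesis
    unfolding Phi_def[of "_ *\<^sub>R \<Lambda>"]
    by (intro continuous_on_vec_lambda continuous_intros continuous_on_component c2)
qed

inductive TS :: "('a::topological_space \<Rightarrow> real \<Rightarrow> complex) \<Rightarrow> bool" where
  basic: "continuous_on UNIV c \<Longrightarrow> TS (\<lambda>a t. c a * exp (\<i> * complex_of_real (\<omega> * t)))"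
| add: "TS f \<Longrightarrow> TS g \<Longrightarrow> TS (\<lambda>a t. f a t + g a t)"

lemma TS_const: "continuous_on UNIV c \<Longrightarrow> TS (\<lambda>a t. c a)"
  using TS.basic[of c 0] by simp

lemma TS_basic_mult:
  assumes "TS g" "continuous_on UNIV c"
  shows "TS (\<lambda>a t. (c a * exp (\<i> * complex_of_real (\<omega> * t))) * g a t)"
  using assms(1)
proof induction
  case (basic d \<omega>')
  have "TS (\<lambda>a t. (c a * d a) * exp (\<i> * complex_of_real ((\<omega> + \<omega>') * t)))"
    by (intro TS.basic continuous_intros assms basic)
  moreover have "(\<lambda>a t. (c a * d a) * exp (\<i> * complex_of_real ((\<omega> + \<omega>') * t))) =
     (\<lambda>a t. (c a * exp (\<i> * complex_of_real (\<omega> * t))) * (d a * exp (\<i> * complex_of_real (\<omega>' * t))))"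
    by (auto simp: fun_eq_iff algebra_simps exp_add[symmetric])
  ultimately show ?case by simp
next
  case (add f g)
  then show ?case using TS.add[OF add(3,4)] by (simp add: distrib_left)
qed

lemma TS_mult:
  assumes "TS f" "TS g"
  shows "TS (\<lambda>a t. f a t * g a t)"
  using assms(1)
proof induction
  case (basic c \<omega>)
  then show ?case using TS_basic_mult[OF assms(2)] by simp
next
  case (add f1 f2)
  then show ?case using TS.add[OF add(3,4)] by (simp add: distrib_right)
qed

lemma TS_sum: "finite I \<Longrightarrow> (\<And>i. i \<in> I \<Longrightarrow> TS (f i)) \<Longrightarrow> TS (\<lambda>a t. \<Sum>i\<in>I. f i a t)"
proof (induction I rule: finite_induct)
  case empty
  then show ?case using TS_const[of "\<lambda>_. 0"] by simp
next
  case (insert x F)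
  then show ?case using TS.add[of "f x" "\<lambda>a t. \<Sum>i\<in>F. f i a t"] by simp
qed

lemma TS_cont: "TS F \<Longrightarrow> continuous_on UNIV (F a)"
  by (induction rule: TS.induct) (auto intro!: continuous_intros)



lemma int_exp_bound:
  assumes "u \<le> v" "\<omega> \<noteq> 0"
  shows "norm (integral {u..v} (\<lambda>t. exp (\<i> * complex_of_real (\<omega> * t)))) \<le> 2 / \<bar>\<omega>\<bar>"
proof -
  define f where "f = (\<lambda>t::real. exp (\<i> * complex_of_real (\<omega> * t)) / (\<i> * complex_of_real \<omega>))"
  have d: "(f has_vector_derivative exp (\<i> * complex_of_real (\<omega> * t))) (at t within {u..v})" for t
  proof -
    have "((\<lambda>z. exp (\<i> * complex_of_real \<omega> * z) / (\<i> * complex_of_real \<omega>)) has_field_derivative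
         exp (\<i> * complex_of_real \<omega> * of_real t)) (at (of_real t))"
      using assms(2) by (auto intro!: derivative_eq_intros)
    from has_vector_derivative_real_field[OF this]
    show ?thesis unfolding f_def by (simp add: mult.assoc)
  qed
  have "((\<lambda>t. exp (\<i> * complex_of_real (\<omega> * t))) has_integral f v - f u) {u..v}"
    by (rule fundamental_theorem_of_calculus[OF assms(1)]) (use d in auto)
  hence "integral {u..v} (\<lambda>t. exp (\<i> * complex_of_real (\<omega> * t))) = f v - f u"
    by (rule integral_unique)
  also have "norm (f v - f u) \<le> norm (f v) + norm (f u)" by (rule norm_triangle_ineq4)
  also have "norm (f v) + norm (f u) = 2 / \<bar>\<omega>\<bar>"
    unfolding f_def by (simp add: norm_divide norm_mult norm_exp_i_times)
  finally show ?thesis .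
qed

lemma maxmin_abs: "max 0 T - min 0 (T::real) = \<bar>T\<bar>" by auto

definition av :: "('a \<Rightarrow> real \<Rightarrow> complex) \<Rightarrow> real \<Rightarrow> 'a \<Rightarrow> complex" where
  "av F T a = (1 / \<bar>T\<bar>) *\<^sub>R integral {min 0 T..max 0 T} (F a)"

lemma TS_conv:
  fixes F :: "complex^'n \<Rightarrow> real \<Rightarrow> complex"
  assumes "TS F"
  shows "\<exists>L. \<forall>R e. e > 0 \<longrightarrow> (\<exists>T0>0. \<forall>a\<in>cball 0 R. \<forall>T. T0 \<le> \<bar>T\<bar> \<longrightarrow> norm (av F T a - L a) \<le> e)"
  using assms
proof induction
  case (basic c \<omega>)
  show ?case
  proof (cases "\<omega> = 0")
    case True
    show ?thesis
    proof (rule exI[of _ c], intro allI impI)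
      fix R e :: real assume "e > 0"
      show "\<exists>T0>0. \<forall>a\<in>cball 0 R. \<forall>T. T0 \<le> \<bar>T\<bar> \<longrightarrow> norm (av (\<lambda>a t. c a * exp (\<i> * complex_of_real (\<omega> * t))) T a - c a) \<le> e"
      proof (intro exI[of _ 1] conjI ballI allI impI)
        fix a :: "complex^'n" and T :: real assume "1 \<le> \<bar>T\<bar>"
        thus "norm (av (\<lambda>a t. c a * exp (\<i> * complex_of_real (\<omega> * t))) T a - c a) \<le> e"
          using \<open>e > 0\<close> True by (auto simp add: av_def integral_const_real content_real maxmin_abs)
      qed simp
    qed
  next
    case False
    show ?thesis
    proof (rule exI[of _ "\<lambda>_. 0"], intro allI impI)
      fix R e :: real assume "e > 0"
      have "compact (c ` cball 0 R)"
        by (rule compact_continuous_image) (auto intro: continuous_on_subset[OF basic])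
      then obtain B where B: "B > 0" "\<And>a. a \<in> cball 0 R \<Longrightarrow> norm (c a) \<le> B"
        using compact_imp_bounded bounded_pos by (metis image_eqI)
      define T0 where "T0 = 2 * B / (\<bar>\<omega>\<bar> * e) + 1"
      have T0: "T0 > 0" unfolding T0_def using B \<open>e>0\<close> False by (auto intro!: add_nonneg_pos)
      show "\<exists>T0>0. \<forall>a\<in>cball 0 R. \<forall>T. T0 \<le> \<bar>T\<bar> \<longrightarrow> norm (av (\<lambda>a t. c a * exp (\<i> * complex_of_real (\<omega> * t))) T a - 0) \<le> e"
      proof (intro exI[of _ T0] conjI ballI allI impI T0)
        fix a :: "complex^'n" and T :: real assume a: "a \<in> cball 0 R" and T: "T0 \<le> \<bar>T\<bar>"
        have Tpos: "\<bar>T\<bar> > 0" using T T0 by linarith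
        have "norm (av (\<lambda>a t. c a * exp (\<i> * complex_of_real (\<omega> * t))) T a - 0)
            = norm (c a) * norm (integral {min 0 T..max 0 T} (\<lambda>t. exp (\<i> * complex_of_real (\<omega> * t)))) / \<bar>T\<bar>"
          by (simp add: av_def integral_mult_right norm_mult)
        also have "\<dots> \<le> B * (2 / \<bar>\<omega>\<bar>) / \<bar>T\<bar>"
          using B a int_exp_bound[of "min 0 T" "max 0 T" \<omega>] False Tpos
          by (intro divide_right_mono mult_mono) auto
        also have "\<dots> \<le> e"
        proof -
          have "2 * B / (\<bar>\<omega>\<bar> * e) \<le> \<bar>T\<bar>" using T unfolding T0_def by linarith
          hence "2 * B \<le> \<bar>T\<bar> * (\<bar>\<omega>\<bar> * e)" using False \<open>e>0\<close> by (simp add: divide_le_eq)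
          thus ?thesis using Tpos False \<open>e > 0\<close> by (simp add: divide_le_eq field_simps)
        qed
        finally show "norm (av (\<lambda>a t. c a * exp (\<i> * complex_of_real (\<omega> * t))) T a - 0) \<le> e" .
      qed
    qed
  qed
next
  case (add f g)
  obtain Lf where Lf: "\<forall>R e. e > 0 \<longrightarrow> (\<exists>T0>0. \<forall>a\<in>cball 0 R. \<forall>T. T0 \<le> \<bar>T\<bar> \<longrightarrow> norm (av f T a - Lf a) \<le> e)"
    using add(3) by blast
  obtain Lg where Lg: "\<forall>R e. e > 0 \<longrightarrow> (\<exists>T0>0. \<forall>a\<in>cball 0 R. \<forall>T. T0 \<le> \<bar>T\<bar> \<longrightarrow> norm (av g T a - Lg a) \<le> e)"
    using add(4) by blast
  show ?case
  proof (intro exI[of _ "\<lambda>a. Lf a + Lg a"] allI impI)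
    fix R e :: real assume e: "e > 0"
    obtain T1 where T1: "T1 > 0" "\<forall>a\<in>cball 0 R. \<forall>T. T1 \<le> \<bar>T\<bar> \<longrightarrow> norm (av f T a - Lf a) \<le> e/2"
      using Lf e by (meson half_gt_zero)
    obtain T2 where T2: "T2 > 0" "\<forall>a\<in>cball 0 R. \<forall>T. T2 \<le> \<bar>T\<bar> \<longrightarrow> norm (av g T a - Lg a) \<le> e/2"
      using Lg e by (meson half_gt_zero)
    show "\<exists>T0>0. \<forall>a\<in>cball 0 R. \<forall>T. T0 \<le> \<bar>T\<bar> \<longrightarrow> norm (av (\<lambda>a t. f a t + g a t) T a - (Lf a + Lg a)) \<le> e"
    proof (intro exI[of _ "max T1 T2"] conjI ballI allI impI)
      show "max T1 T2 > 0" using T1 by simp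
      fix a :: "complex^'n" and T :: real assume a: "a \<in> cball 0 R" and T: "max T1 T2 \<le> \<bar>T\<bar>"
      have "av (\<lambda>a t. f a t + g a t) T a = av f T a + av g T a"
        unfolding av_def
        by (subst integral_add) (auto intro!: integrable_continuous_interval continuous_on_subset[OF TS_cont] add(1,2) simp: scaleR_add_right)
      hence "norm (av (\<lambda>a t. f a t + g a t) T a - (Lf a + Lg a)) = norm ((av f T a - Lf a) + (av g T a - Lg a))"
        by (simp add: algebra_simps)
      also have "\<dots> \<le> e/2 + e/2"
        using T1(2) T2(2) a T by (intro norm_triangle_le add_mono) auto
      finally show "norm (av (\<lambda>a t. f a t + g a t) T a - (Lf a + Lg a)) \<le> e" by simp
    qed
  qed
qed



lemma lin_decomp:
  assumes "bounded_linear f"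
  shows "f (v::complex^'n) = (\<Sum>k\<in>UNIV. Re (v$k) * f (axis k 1) + Im (v$k) * f (axis k \<i>))"
proof -
  have "v = (\<Sum>k\<in>UNIV. Re (v$k) *\<^sub>R axis k 1 + Im (v$k) *\<^sub>R axis k \<i>)"
    by (simp add: vec_eq_iff axis_def complex_eq_iff if_distrib cong: if_cong)
  hence "f v = f (\<Sum>k\<in>UNIV. Re (v$k) *\<^sub>R axis k 1 + Im (v$k) *\<^sub>R axis k \<i>)" by simp
  also have "\<dots> = (\<Sum>k\<in>UNIV. Re (v$k) * f (axis k 1) + Im (v$k) * f (axis k \<i>))"
    using assms by (simp add: linear_sum bounded_linear.linear linear_add linear_scale)
  finally show ?thesis .
qed

lemma Re_exp_eq: "complex_of_real (Re (exp (\<i> * complex_of_real (- (t * l))) * z)) =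
   (z/2) * exp (\<i> * complex_of_real ((-l) * t)) + (cnj z/2) * exp (\<i> * complex_of_real (l * t))"
  unfolding cis_conv_exp[symmetric] by (simp add: complex_eq_iff algebra_simps cos_minus sin_minus field_simps)

lemma Im_exp_eq: "complex_of_real (Im (exp (\<i> * complex_of_real (- (t * l))) * z)) =
   (-\<i>*z/2) * exp (\<i> * complex_of_real ((-l) * t)) + (\<i>*cnj z/2) * exp (\<i> * complex_of_real (l * t))"
  unfolding cis_conv_exp[symmetric] by (simp add: complex_eq_iff algebra_simps cos_minus sin_minus field_simps)

lemma TS_linear:
  assumes "bounded_linear f"
  shows "TS (\<lambda>(a::complex^'n) t. complex_of_real (f (Phi (- (t *\<^sub>R \<Lambda>)) a)))"
proof -
  have re: "TS (\<lambda>(a::complex^'n) t. complex_of_real (Re (Phi (- (t *\<^sub>R \<Lambda>)) a $ k)))" for k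
  proof -
    have eq: "\<And>a t. Phi (-(t *\<^sub>R \<Lambda>)) a $ k = exp (\<i> * complex_of_real (- (t * \<Lambda>$k))) * a$k" by simp
    show ?thesis unfolding eq Re_exp_eq
      apply (rule TS.add)
       apply (rule TS.basic)
       subgoal by (auto intro!: continuous_intros continuous_on_component)
      apply (rule TS.basic)
      subgoal by (auto intro!: continuous_intros continuous_on_component)
      done
  qed
  have im: "TS (\<lambda>(a::complex^'n) t. complex_of_real (Im (Phi (- (t *\<^sub>R \<Lambda>)) a $ k)))" for k
  proof -
    have eq: "\<And>a t. Phi (-(t *\<^sub>R \<Lambda>)) a $ k = exp (\<i> * complex_of_real (- (t * \<Lambda>$k))) * a$k" by simp
    show ?thesis unfolding eq Im_exp_eq
      apply (rule TS.add)
       apply (rule TS.basic)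
       subgoal by (auto intro!: continuous_intros continuous_on_component)
      apply (rule TS.basic)
      subgoal by (auto intro!: continuous_intros continuous_on_component)
      done
  qed
  have "TS (\<lambda>(a::complex^'n) t. \<Sum>k\<in>UNIV. complex_of_real (Re (Phi (- (t *\<^sub>R \<Lambda>)) a $ k)) * complex_of_real (f (axis k 1))
      + complex_of_real (Im (Phi (- (t *\<^sub>R \<Lambda>)) a $ k)) * complex_of_real (f (axis k \<i>)))"
    apply (rule TS_sum)
    subgoal by simp
    apply (rule TS.add)
     apply (rule TS_mult)
      apply (rule re)
     apply (rule TS_const)
     apply simp
    apply (rule TS_mult)
      apply (rule im)
     apply (rule TS_const)
     apply simp
    done
  thus ?thesis by (subst lin_decomp[OF assms]) simp
qed

lemma TS_rpf:
  assumes "real_polynomial_function f"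
  shows "TS (\<lambda>(a::complex^'n) t. complex_of_real (f (Phi (- (t *\<^sub>R \<Lambda>)) a)))"
  using assms
proof induction
  case (linear f) then show ?case by (rule TS_linear)
next
  case (const c) then show ?case using TS_const[of "\<lambda>_. complex_of_real c"] by simp
next
  case (add f g) show ?case unfolding of_real_add by (rule TS.add[OF add.IH])
next
  case (mult f g) show ?case unfolding of_real_mult by (rule TS_mult[OF mult.IH])
qed

lemma avgT_component:
  fixes g :: "complex^'n \<Rightarrow> complex^'n" and \<Lambda> :: "real^'n"
  assumes "continuous_on UNIV g"
  shows "avgT \<Lambda> g T a $ j = av (\<lambda>a t. exp (\<i> * complex_of_real (t * \<Lambda> $ j)) * g (Phi (- (t *\<^sub>R \<Lambda>)) a) $ j) T a"
proof -
  have "(\<lambda>t. Phi (t *\<^sub>R \<Lambda>) (g (Phi (- (t *\<^sub>R \<Lambda>)) a))) integrable_on {min 0 T..max 0 T}"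
    by (intro integrable_continuous_interval continuous_on_subset[OF cont_integrand[OF assms]]) auto
  from integral_linear[OF this bounded_linear_vec_nth[of j], unfolded o_def] show ?thesis
    by (simp add: avgT_def av_def)
qed

lemma poly_conv:
  fixes g :: "complex^'n \<Rightarrow> complex^'n" and \<Lambda> :: "real^'n"
  assumes "polynomial_function g"
  shows "\<exists>L. \<forall>R e. e > 0 \<longrightarrow> (\<exists>T0>0. \<forall>a\<in>cball 0 R. \<forall>T. T0 \<le> \<bar>T\<bar> \<longrightarrow> norm (avgT \<Lambda> g T a - L a) \<le> e)"
proof -
  have gc: "continuous_on UNIV g" by (rule continuous_on_polymonial_function[OF assms])
  have "\<forall>j. \<exists>L. \<forall>R e. e > 0 \<longrightarrow> (\<exists>T0>0. \<forall>a\<in>cball 0 R. \<forall>T. T0 \<le> \<bar>T\<bar> \<longrightarrow>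
      norm (av (\<lambda>a t. exp (\<i> * complex_of_real (t * \<Lambda> $ j)) * g (Phi (- (t *\<^sub>R \<Lambda>)) a) $ j) T a - L a) \<le> e)"
  proof
    fix j
    have rp: "real_polynomial_function (\<lambda>v. Re (g v $ j))" "real_polynomial_function (\<lambda>v. Im (g v $ j))"
      using assms unfolding polynomial_function_def o_def
      using bounded_linear_compose[OF bounded_linear_Re bounded_linear_vec_nth[of j]]
                 bounded_linear_compose[OF bounded_linear_Im bounded_linear_vec_nth[of j]]
      by auto
    have tsX: "TS (\<lambda>(a::complex^'n) t. (1 * exp (\<i> * complex_of_real ((\<Lambda> $ j) * t))) *
        (complex_of_real (Re (g (Phi (- (t *\<^sub>R \<Lambda>)) a) $ j)) + \<i> * complex_of_real (Im (g (Phi (- (t *\<^sub>R \<Lambda>)) a) $ j))))"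
      apply (rule TS_mult[OF TS.basic TS.add])
        apply (rule continuous_on_const)
       apply (rule TS_rpf[OF rp(1)])
      apply (rule TS_mult[OF TS_const TS_rpf[OF rp(2)]])
      apply (rule continuous_on_const)
      done
    moreover have eqX: "(\<lambda>(a::complex^'n) t. (1 * exp (\<i> * complex_of_real ((\<Lambda> $ j) * t))) *
        (complex_of_real (Re (g (Phi (- (t *\<^sub>R \<Lambda>)) a) $ j)) + \<i> * complex_of_real (Im (g (Phi (- (t *\<^sub>R \<Lambda>)) a) $ j))))
       = (\<lambda>a t. exp (\<i> * complex_of_real (t * \<Lambda> $ j)) * g (Phi (- (t *\<^sub>R \<Lambda>)) a) $ j)"
      by (intro ext) (simp only: mult_1 complex_eq[symmetric] mult.commute[of "\<Lambda> $ j"])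
    show "\<exists>L. \<forall>R e. e > 0 \<longrightarrow> (\<exists>T0>0. \<forall>a\<in>cball 0 R. \<forall>T. T0 \<le> \<bar>T\<bar> \<longrightarrow>
      norm (av (\<lambda>a t. exp (\<i> * complex_of_real (t * \<Lambda> $ j)) * g (Phi (- (t *\<^sub>R \<Lambda>)) a) $ j) T a - L a) \<le> e)"
      by (rule TS_conv[OF tsX[unfolded eqX]])
  qed
  from choice[OF this] obtain L where L0: "\<forall>j. \<forall>R e. e > 0 \<longrightarrow> (\<exists>T0>0. \<forall>a\<in>cball 0 R. \<forall>T. T0 \<le> \<bar>T\<bar> \<longrightarrow>
      norm (av (\<lambda>a t. exp (\<i> * complex_of_real (t * \<Lambda> $ j)) * g (Phi (- (t *\<^sub>R \<Lambda>)) a) $ j) T a - L j a) \<le> e)"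
    by blast
  have L: "\<And>j R e. e > 0 \<Longrightarrow> (\<exists>T0>0. \<forall>a\<in>cball 0 R. \<forall>T. T0 \<le> \<bar>T\<bar> \<longrightarrow>
      norm (av (\<lambda>a t. exp (\<i> * complex_of_real (t * \<Lambda> $ j)) * g (Phi (- (t *\<^sub>R \<Lambda>)) a) $ j) T a - L j a) \<le> e)"
    using L0 by blast
  show ?thesis
  proof (rule exI[of _ "\<lambda>a. \<chi> j. L j a"], intro allI impI)
    fix R e :: real assume e: "e > 0"
    define e' where "e' = e / real CARD('n)"
    have e': "e' > 0" using e by (simp add: e'_def)
    have "\<forall>j. \<exists>T0>0. \<forall>a\<in>cball 0 R. \<forall>T. T0 \<le> \<bar>T\<bar> \<longrightarrow>
      norm (av (\<lambda>a t. exp (\<i> * complex_of_real (t * \<Lambda> $ j)) * g (Phi (- (t *\<^sub>R \<Lambda>)) a) $ j) T a - L j a) \<le> e'"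
      using L[where R=R and e=e'] e' by blast
    from choice[OF this] obtain T0 where T00: "\<forall>j. T0 j > 0 \<and> (\<forall>a\<in>cball 0 R. \<forall>T. T0 j \<le> \<bar>T\<bar> \<longrightarrow>
      norm (av (\<lambda>a t. exp (\<i> * complex_of_real (t * \<Lambda> $ j)) * g (Phi (- (t *\<^sub>R \<Lambda>)) a) $ j) T a - L j a) \<le> e')"
      by blast
    have T0: "\<And>j. T0 j > 0" "\<And>j. \<forall>a\<in>cball 0 R. \<forall>T. T0 j \<le> \<bar>T\<bar> \<longrightarrow>
      norm (av (\<lambda>a t. exp (\<i> * complex_of_real (t * \<Lambda> $ j)) * g (Phi (- (t *\<^sub>R \<Lambda>)) a) $ j) T a - L j a) \<le> e'"
      using T00 by auto
    show "\<exists>T0>0. \<forall>a\<in>cball 0 R. \<forall>T. T0 \<le> \<bar>T\<bar> \<longrightarrow> norm (avgT \<Lambda> g T a - (\<chi> j. L j a)) \<le> e"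
    proof (intro exI[of _ "\<Sum>j\<in>UNIV. T0 j"] conjI ballI allI impI)
      show "(\<Sum>j\<in>UNIV. T0 j) > 0" using T0(1) by (simp add: sum_pos)
      fix a :: "complex^'n" and T :: real assume a: "a \<in> cball 0 R" and T: "(\<Sum>j\<in>UNIV. T0 j) \<le> \<bar>T\<bar>"
      have "norm (avgT \<Lambda> g T a - (\<chi> j. L j a)) \<le> (\<Sum>j\<in>UNIV. norm ((avgT \<Lambda> g T a - (\<chi> j. L j a)) $ j))"
        by (rule norm_vec_le_sum)
      also have "\<dots> \<le> (\<Sum>j\<in>(UNIV::'n set). e')"
      proof (rule sum_mono)
        fix j :: 'n
        have "T0 j \<le> (\<Sum>j\<in>UNIV. T0 j)" using T0(1) by (intro member_le_sum) (auto intro: less_imp_le)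
        thus "norm ((avgT \<Lambda> g T a - (\<chi> j. L j a)) $ j) \<le> e'"
          using T0(2)[of j] a T by (simp add: avgT_component[OF gc])
      qed
      also have "\<dots> = e" by (simp add: e'_def)
      finally show "norm (avgT \<Lambda> g T a - (\<chi> j. L j a)) \<le> e" .
    qed
  qed
qed



lemma avg_diff_bound:
  fixes P Q :: "complex^'n \<Rightarrow> complex^'n" and \<Lambda> :: "real^'n"
  assumes cP: "continuous_on UNIV P" and cQ: "continuous_on UNIV Q" and T: "T \<noteq> 0"
    and bnd: "\<And>t. norm (P (Phi (- (t *\<^sub>R \<Lambda>)) u) - Q (Phi (- (t *\<^sub>R \<Lambda>)) v)) \<le> B"
  shows "norm (avgT \<Lambda> P T u - avgT \<Lambda> Q T v) \<le> B"
proof -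
  define f where "f = (\<lambda>t. Phi (t *\<^sub>R \<Lambda>) (P (Phi (- (t *\<^sub>R \<Lambda>)) u)))"
  define h where "h = (\<lambda>t. Phi (t *\<^sub>R \<Lambda>) (Q (Phi (- (t *\<^sub>R \<Lambda>)) v)))"
  have cf: "continuous_on UNIV f" unfolding f_def by (rule cont_integrand[OF cP])
  have ch: "continuous_on UNIV h" unfolding h_def by (rule cont_integrand[OF cQ])
  let ?S = "{min 0 T..max 0 T}"
  have if1: "f integrable_on ?S" by (intro integrable_continuous_interval continuous_on_subset[OF cf]) auto
  have ih1: "h integrable_on ?S" by (intro integrable_continuous_interval continuous_on_subset[OF ch]) auto
  have "avgT \<Lambda> P T u - avgT \<Lambda> Q T v = (1 / \<bar>T\<bar>) *\<^sub>R (integral ?S f - integral ?S h)"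
    by (simp add: avgT_def f_def h_def scaleR_diff_right)
  also have "integral ?S f - integral ?S h = integral ?S (\<lambda>t. f t - h t)"
    by (rule integral_diff[OF if1 ih1, symmetric])
  finally have eq: "avgT \<Lambda> P T u - avgT \<Lambda> Q T v = (1 / \<bar>T\<bar>) *\<^sub>R integral ?S (\<lambda>t. f t - h t)" .
  have "norm (integral ?S (\<lambda>t. f t - h t)) \<le> B * (max 0 T - min 0 T)"
  proof (rule integral_bound)
    show "continuous_on ?S (\<lambda>t. f t - h t)"
      by (intro continuous_intros continuous_on_subset[OF cf] continuous_on_subset[OF ch]) auto
    fix t
    have "norm (f t - h t) = norm (P (Phi (- (t *\<^sub>R \<Lambda>)) u) - Q (Phi (- (t *\<^sub>R \<Lambda>)) v))"
      unfolding f_def h_def Phi_diff by simp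
    thus "norm (f t - h t) \<le> B" using bnd by simp
  qed auto
  hence "norm (integral ?S (\<lambda>t. f t - h t)) \<le> B * \<bar>T\<bar>" by (simp add: maxmin_abs)
  thus ?thesis unfolding eq using T by (simp add: divide_le_eq mult.commute)
qed

lemma cauchy_avg:
  fixes P :: "complex^'n \<Rightarrow> complex^'n" and \<Lambda> :: "real^'n"
  assumes cP: "continuous_on UNIV P" and e: "e > 0"
  shows "\<exists>T0>0. \<forall>a\<in>cball 0 R. \<forall>T S. T0 \<le> \<bar>T\<bar> \<longrightarrow> T0 \<le> \<bar>S\<bar> \<longrightarrow> norm (avgT \<Lambda> P T a - avgT \<Lambda> P S a) \<le> e"
proof -
  obtain g where g: "polynomial_function g" "\<And>x. x \<in> cball 0 R \<Longrightarrow> norm (P x - g x) < e/4"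
  proof -
    have "continuous_on (cball 0 R) P" by (rule continuous_on_subset[OF cP]) simp
    from Stone_Weierstrass_polynomial_function[OF compact_cball this, of "e/4"] e
    show ?thesis using that by auto
  qed
  have cg: "continuous_on UNIV g" by (rule continuous_on_polymonial_function[OF g(1)])
  from poly_conv[OF g(1), of \<Lambda>] obtain L where L: "\<forall>R e. e > 0 \<longrightarrow> (\<exists>T0>0. \<forall>a\<in>cball 0 R. \<forall>T. T0 \<le> \<bar>T\<bar> \<longrightarrow> norm (avgT \<Lambda> g T a - L a) \<le> e)"
    ..
  obtain T0 where T0: "T0 > 0" "\<forall>a\<in>cball 0 R. \<forall>T. T0 \<le> \<bar>T\<bar> \<longrightarrow> norm (avgT \<Lambda> g T a - L a) \<le> e/4"
    using L[rule_format, of "e/4" R] e by auto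
  have ap: "norm (avgT \<Lambda> P T a - avgT \<Lambda> g T a) \<le> e/4" if "a \<in> cball 0 R" "T \<noteq> 0" for a T
  proof (rule avg_diff_bound[OF cP cg that(2)])
    fix t
    have "Phi (- (t *\<^sub>R \<Lambda>)) a \<in> cball 0 R" using that(1) by simp
    thus "norm (P (Phi (- (t *\<^sub>R \<Lambda>)) a) - g (Phi (- (t *\<^sub>R \<Lambda>)) a)) \<le> e/4"
      using g(2) less_imp_le by blast
  qed
  show ?thesis
  proof (intro exI[of _ T0] conjI ballI allI impI T0(1))
    fix a :: "complex^'n" and T S :: real assume a: "a \<in> cball 0 R" and T: "T0 \<le> \<bar>T\<bar>" and S: "T0 \<le> \<bar>S\<bar>"
    have T0': "T \<noteq> 0" "S \<noteq> 0" using T S T0(1) by auto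
    define x1 where "x1 = avgT \<Lambda> P T a - avgT \<Lambda> g T a"
    define x2 where "x2 = avgT \<Lambda> g T a - L a"
    define x3 where "x3 = avgT \<Lambda> g S a - L a"
    define x4 where "x4 = avgT \<Lambda> P S a - avgT \<Lambda> g S a"
    have n1: "norm x1 \<le> e/4" unfolding x1_def by (rule ap[OF a T0'(1)])
    have n4: "norm x4 \<le> e/4" unfolding x4_def by (rule ap[OF a T0'(2)])
    have n2: "norm x2 \<le> e/4" unfolding x2_def using T0(2) a T by blast
    have n3: "norm x3 \<le> e/4" unfolding x3_def using T0(2) a S by blast
    have "avgT \<Lambda> P T a - avgT \<Lambda> P S a = x1 + x2 - x3 - x4"
      unfolding x1_def x2_def x3_def x4_def by simp
    also have "norm (x1 + x2 - x3 - x4) \<le> norm (x1 + x2 - x3) + norm x4" by (rule norm_triangle_ineq4)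
    also have "norm (x1 + x2 - x3) \<le> norm (x1 + x2) + norm x3" by (rule norm_triangle_ineq4)
    also have "norm (x1 + x2) \<le> norm x1 + norm x2" by (rule norm_triangle_ineq)
    finally show "norm (avgT \<Lambda> P T a - avgT \<Lambda> P S a) \<le> e" using n1 n2 n3 n4 by simp
  qed
qed



lemma avgT_zero: "avgT \<Lambda> (\<lambda>_. 0) T v = (0::complex^'n)"
proof -
  have "Phi w (0::complex^'n) = 0" for w by (simp add: vec_eq_iff)
  thus ?thesis by (simp add: avgT_def)
qed

theorem lemma3p2:
  fixes \<Lambda> :: "real^'n" and X :: "real \<Rightarrow> real" and P :: "complex^'n \<Rightarrow> complex^'n"
  assumes "\<forall>i. \<Lambda> $ i \<noteq> 0"
    and "mono_on {0..} X" and "continuous_on {0..} X" and "\<forall>R\<ge>0. X R \<ge> 0"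
    and "P \<in> LipX X"
  shows "\<exists>Pbar. (\<forall>a. ((\<lambda>T. avgT \<Lambda> P T a) \<longlongrightarrow> Pbar a) at_top)
            \<and> (\<forall>a. ((\<lambda>T. avgT \<Lambda> P T a) \<longlongrightarrow> Pbar a) at_bot)
            \<and> Pbar \<in> LipX X
            \<and> (\<forall>R>0. uniform_limit (cball 0 R) (\<lambda>T. avgT \<Lambda> P T) Pbar at_top
                    \<and> uniform_limit (cball 0 R) (\<lambda>T. avgT \<Lambda> P T) Pbar at_bot)"
proof -
  have cP: "continuous_on UNIV P" and bP: "\<And>R v. R \<ge> 0 \<Longrightarrow> v \<in> ball 0 R \<Longrightarrow> norm (P v) \<le> X R"
    and lP: "\<And>R. R \<ge> 0 \<Longrightarrow> lipschitz_on (X R) (ball 0 R) P"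
    using assms(5) unfolding LipX_def by auto
  define Pbar where "Pbar a = lim (\<lambda>n. avgT \<Lambda> P (real n) a)" for a
  have conv: "(\<lambda>n. avgT \<Lambda> P (real n) a) \<longlonglongrightarrow> Pbar a" for a
  proof -
    have "Cauchy (\<lambda>n. avgT \<Lambda> P (real n) a)"
    proof (rule CauchyI)
      fix e :: real assume e: "e > 0"
      obtain T0 where T0: "T0 > 0" "\<forall>b\<in>cball 0 (norm a). \<forall>T S. T0 \<le> \<bar>T\<bar> \<longrightarrow> T0 \<le> \<bar>S\<bar> \<longrightarrow>
          norm (avgT \<Lambda> P T b - avgT \<Lambda> P S b) \<le> e/2"
        using cauchy_avg[OF cP, of "e/2" "norm a" \<Lambda>] e by auto
      show "\<exists>M. \<forall>m\<ge>M. \<forall>n\<ge>M. norm (avgT \<Lambda> P (real m) a - avgT \<Lambda> P (real n) a) < e"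
      proof (intro exI[of _ "nat \<lceil>T0\<rceil>"] allI impI)
        fix m n :: nat assume "nat \<lceil>T0\<rceil> \<le> m" "nat \<lceil>T0\<rceil> \<le> n"
        hence "T0 \<le> \<bar>real m\<bar>" "T0 \<le> \<bar>real n\<bar>" by linarith+
        hence "norm (avgT \<Lambda> P (real m) a - avgT \<Lambda> P (real n) a) \<le> e/2" using T0(2) by auto
        thus "norm (avgT \<Lambda> P (real m) a - avgT \<Lambda> P (real n) a) < e" using e by linarith
      qed
    qed
    thus ?thesis unfolding Pbar_def using Cauchy_convergent convergent_LIMSEQ_iff by blast
  qed
  have unif: "\<exists>T0>0. \<forall>a\<in>cball 0 R. \<forall>T. T0 \<le> \<bar>T\<bar> \<longrightarrow> norm (avgT \<Lambda> P T a - Pbar a) \<le> e"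
    if e: "e > 0" for R e :: real
  proof -
    obtain T0 where T0: "T0 > 0" "\<forall>b\<in>cball 0 R. \<forall>T S. T0 \<le> \<bar>T\<bar> \<longrightarrow> T0 \<le> \<bar>S\<bar> \<longrightarrow>
          norm (avgT \<Lambda> P T b - avgT \<Lambda> P S b) \<le> e"
      using cauchy_avg[OF cP e, of R \<Lambda>] by auto
    show ?thesis
    proof (intro exI[of _ T0] conjI ballI allI impI T0(1))
      fix a :: "complex^'n" and T :: real assume a: "a \<in> cball 0 R" and T: "T0 \<le> \<bar>T\<bar>"
      have lim: "(\<lambda>n. norm (avgT \<Lambda> P T a - avgT \<Lambda> P (real n) a)) \<longlonglongrightarrow> norm (avgT \<Lambda> P T a - Pbar a)"
        by (intro tendsto_intros conv)
      have ev: "\<forall>\<^sub>F n in sequentially. norm (avgT \<Lambda> P T a - avgT \<Lambda> P (real n) a) \<le> e"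
        unfolding eventually_sequentially
      proof (intro exI[of _ "nat \<lceil>T0\<rceil>"] allI impI)
        fix n assume "nat \<lceil>T0\<rceil> \<le> n"
        hence "T0 \<le> \<bar>real n\<bar>" by linarith
        thus "norm (avgT \<Lambda> P T a - avgT \<Lambda> P (real n) a) \<le> e" using T0(2) a T by auto
      qed
      show "norm (avgT \<Lambda> P T a - Pbar a) \<le> e"
        by (rule tendsto_upperbound[OF lim ev]) simp
    qed
  qed
  have ul_top: "uniform_limit (cball 0 R) (\<lambda>T. avgT \<Lambda> P T) Pbar at_top" for R
    unfolding uniform_limit_iff
  proof (intro allI impI)
    fix e :: real assume e: "e > 0"
    obtain T0 where T0: "T0 > 0" "\<forall>a\<in>cball 0 R. \<forall>T. T0 \<le> \<bar>T\<bar> \<longrightarrow> norm (avgT \<Lambda> P T a - Pbar a) \<le> e/2"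
      using unif[of "e/2" R] e by auto
    show "\<forall>\<^sub>F T in at_top. \<forall>a\<in>cball 0 R. dist (avgT \<Lambda> P T a) (Pbar a) < e"
      unfolding eventually_at_top_linorder
    proof (intro exI[of _ T0] allI impI ballI)
      fix T :: real and a :: "complex^'n" assume "T0 \<le> T" "a \<in> cball 0 R"
      hence "norm (avgT \<Lambda> P T a - Pbar a) \<le> e/2" using T0 by auto
      thus "dist (avgT \<Lambda> P T a) (Pbar a) < e" using e by (simp add: dist_norm)
    qed
  qed
  have ul_bot: "uniform_limit (cball 0 R) (\<lambda>T. avgT \<Lambda> P T) Pbar at_bot" for R
    unfolding uniform_limit_iff
  proof (intro allI impI)
    fix e :: real assume e: "e > 0"
    obtain T0 where T0: "T0 > 0" "\<forall>a\<in>cball 0 R. \<forall>T. T0 \<le> \<bar>T\<bar> \<longrightarrow> norm (avgT \<Lambda> P T a - Pbar a) \<le> e/2"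
      using unif[of "e/2" R] e by auto
    show "\<forall>\<^sub>F T in at_bot. \<forall>a\<in>cball 0 R. dist (avgT \<Lambda> P T a) (Pbar a) < e"
      unfolding eventually_at_bot_linorder
    proof (intro exI[of _ "-T0"] allI impI ballI)
      fix T :: real and a :: "complex^'n" assume "T \<le> -T0" "a \<in> cball 0 R"
      hence "norm (avgT \<Lambda> P T a - Pbar a) \<le> e/2" using T0 by auto
      thus "dist (avgT \<Lambda> P T a) (Pbar a) < e" using e by (simp add: dist_norm)
    qed
  qed
  have ev1: "\<forall>\<^sub>F n in sequentially. real n \<noteq> 0"
    unfolding eventually_sequentially by (intro exI[of _ 1]) auto
  have bnd: "norm (Pbar v) \<le> X R" if R: "R \<ge> 0" and v: "v \<in> ball 0 R" for R v
  proof -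
    have lim: "(\<lambda>n. norm (avgT \<Lambda> P (real n) v)) \<longlonglongrightarrow> norm (Pbar v)"
      by (intro tendsto_intros conv)
    have "\<forall>\<^sub>F n in sequentially. norm (avgT \<Lambda> P (real n) v) \<le> X R"
      using ev1
    proof eventually_elim
      case (elim n)
      have "norm (avgT \<Lambda> P (real n) v - avgT \<Lambda> (\<lambda>_. 0) (real n) v) \<le> X R"
      proof (rule avg_diff_bound[OF cP _ elim])
        show "continuous_on UNIV (\<lambda>_. 0::complex^'n)" by simp
        fix t
        have "Phi (- (t *\<^sub>R \<Lambda>)) v \<in> ball 0 R" using v by simp
        thus "norm (P (Phi (- (t *\<^sub>R \<Lambda>)) v) - 0) \<le> X R" using bP[OF R] by simp
      qed
      thus ?case by (simp add: avgT_zero)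
    qed
    thus ?thesis by (rule tendsto_upperbound[OF lim]) simp
  qed
  have lip: "lipschitz_on (X R) (ball 0 R) Pbar" if R: "R \<ge> 0" for R
    unfolding lipschitz_on_def
  proof (intro conjI ballI)
    show "0 \<le> X R" using assms(4) R by auto
    fix u v :: "complex^'n" assume u: "u \<in> ball 0 R" and v: "v \<in> ball 0 R"
    have lim: "(\<lambda>n. dist (avgT \<Lambda> P (real n) u) (avgT \<Lambda> P (real n) v)) \<longlonglongrightarrow> dist (Pbar u) (Pbar v)"
      by (intro tendsto_intros conv)
    have "\<forall>\<^sub>F n in sequentially. dist (avgT \<Lambda> P (real n) u) (avgT \<Lambda> P (real n) v) \<le> X R * dist u v"
      using ev1
    proof eventually_elim
      case (elim n)
      have "norm (avgT \<Lambda> P (real n) u - avgT \<Lambda> P (real n) v) \<le> X R * dist u v"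
      proof (rule avg_diff_bound[OF cP cP elim])
        fix t
        have "Phi (- (t *\<^sub>R \<Lambda>)) u \<in> ball 0 R" "Phi (- (t *\<^sub>R \<Lambda>)) v \<in> ball 0 R" using u v by simp_all
        from lipschitz_onD[OF lP[OF R] this]
        have "dist (P (Phi (- (t *\<^sub>R \<Lambda>)) u)) (P (Phi (- (t *\<^sub>R \<Lambda>)) v)) \<le> X R * dist (Phi (- (t *\<^sub>R \<Lambda>)) u) (Phi (- (t *\<^sub>R \<Lambda>)) v)" .
        also have "dist (Phi (- (t *\<^sub>R \<Lambda>)) u) (Phi (- (t *\<^sub>R \<Lambda>)) v) = dist u v"
          by (simp add: dist_norm Phi_diff)
        finally show "norm (P (Phi (- (t *\<^sub>R \<Lambda>)) u) - P (Phi (- (t *\<^sub>R \<Lambda>)) v)) \<le> X R * dist u v"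
          by (simp add: dist_norm)
      qed
      thus ?case by (simp add: dist_norm)
    qed
    thus "dist (Pbar u) (Pbar v) \<le> X R * dist u v" by (rule tendsto_upperbound[OF lim]) simp
  qed
  have cont: "continuous_on UNIV Pbar"
  proof (rule continuous_at_imp_continuous_on, intro ballI)
    fix x :: "complex^'n"
    have "continuous_on (ball 0 (norm x + 1)) Pbar"
      by (rule lipschitz_on_continuous_on[OF lip]) (simp add: add_nonneg_nonneg)
    hence "\<forall>y\<in>ball 0 (norm x + 1). isCont Pbar y"
      using continuous_on_eq_continuous_at[OF open_ball] by blast
    thus "isCont Pbar x" by simp
  qed
  have "Pbar \<in> LipX X" unfolding LipX_def using cont bnd lip by blast
  moreover have "\<forall>a. ((\<lambda>T. avgT \<Lambda> P T a) \<longlongrightarrow> Pbar a) at_top"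
    using tendsto_uniform_limitI[OF ul_top] by (metis centre_in_cball norm_ge_zero mem_cball_0 order_refl)
  moreover have "\<forall>a. ((\<lambda>T. avgT \<Lambda> P T a) \<longlongrightarrow> Pbar a) at_bot"
    using tendsto_uniform_limitI[OF ul_bot] by (metis mem_cball_0 order_refl)
  ultimately show ?thesis using ul_top ul_bot by blast
qed

end
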